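(* For every integer $k\ge 2$, the set of maximal simplices of $\mathrm{VR}(T_{3k,3k};k)$ equals $M_{3k,k}\cup N_{3k,k}$, where \[N_{3k,k}=\big\{\{([a],[b]),([a+k],[b]),([a+2k],[b])\},\ \{([a],[b]),([a],[b+k]),([a],[b+2k])\} : 0\le a,b\le 3k-1\big\}.\] For every integer $k\ge 3$, the set of maximal simplices of $\mathrm{VR}(T_{3k-1,3k-1};k)$ equals $M_{3k-1,k}\cup N_{3k-1,k}$, where \[N_{3k-1,k}=\big\{\{([a],[b]),([a+k],[b]),([a+2k-1],[b]),([a+2k],[b])\},\ \{([a],[b]),([a],[b+k]),([a],[b+2k-1]),([a],[b+2k])\} : 0\le a,b\le 3k-2\big\}.\]
   Context: $\mathbb{Z}^2$ carries the $l^1$ metric. $T_{n,n}=\mathbb{Z}^2/(n\mathbb{Z}\times n\mathbb{Z})$ with quotient map $\pi_n$ and quotient metric $d([x],[y])=\min\{d(x',y'):\pi_n(x')=[x],\pi_n(y')=[y]\}$ (equivalently $\{0,\dots,n-1\}^2$ with the $l^1$ product of cyclic metrics); its points are written $([a],[b])$ with $[a]$ the residue of $a$ mod $n$. $\mathrm{VR}(X;r)$ is the simplicial complex on $X$ whose simplices are the finite nonempty subsets of diameter at most $r$; a maximal simplex is one not properly contained in another. $M_{n,k}=\{\pi_n(\sigma):\sigma \text{ a maximal simplex of } \mathrm{VR}(\mathbb{Z}^2;k)\}$. *)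

theory Defs
  imports Main
begin

definition zdist :: "int \<times> int \<Rightarrow> int \<times> int \<Rightarrow> int" where
  "zdist p q = \<bar>fst p - fst q\<bar> + \<bar>snd p - snd q\<bar>"

(* T_{n,n} represented by {0..n-1}^2; the quotient map pi_n *)
definition torus :: "int \<Rightarrow> (int \<times> int) set" where
  "torus n = {0..<n} \<times> {0..<n}"

definition proj :: "int \<Rightarrow> int \<times> int \<Rightarrow> int \<times> int" where
  "proj n p = (fst p mod n, snd p mod n)"

(* cyclic metric on Z/nZ and its l^1 product (= quotient metric on T_{n,n}) *)
definition cdist :: "int \<Rightarrow> int \<Rightarrow> int \<Rightarrow> int" where
  "cdist n x y = min ((x - y) mod n) ((y - x) mod n)"

definition tdist :: "int \<Rightarrow> int \<times> int \<Rightarrow> int \<times> int \<Rightarrow> int" where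
  "tdist n p q = cdist n (fst p) (fst q) + cdist n (snd p) (snd q)"

definition VR :: "'a set \<Rightarrow> ('a \<Rightarrow> 'a \<Rightarrow> int) \<Rightarrow> int \<Rightarrow> 'a set set" where
  "VR X d r = {S. S \<subseteq> X \<and> finite S \<and> S \<noteq> {} \<and> (\<forall>x\<in>S. \<forall>y\<in>S. d x y \<le> r)}"

definition maximal_simplices :: "'a set set \<Rightarrow> 'a set set" where
  "maximal_simplices K = {S \<in> K. \<forall>T\<in>K. S \<subseteq> T \<longrightarrow> T = S}"

definition Mset :: "int \<Rightarrow> int \<Rightarrow> (int \<times> int) set set" where
  "Mset n k = (\<lambda>\<sigma>. proj n ` \<sigma>) ` maximal_simplices (VR UNIV zdist k)"

definition N3 :: "int \<Rightarrow> (int \<times> int) set set" where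
  "N3 k = (let n = 3 * k in
     {{proj n (a, b), proj n (a + k, b), proj n (a + 2 * k, b)} | a b. 0 \<le> a \<and> a \<le> n - 1 \<and> 0 \<le> b \<and> b \<le> n - 1}
   \<union> {{proj n (a, b), proj n (a, b + k), proj n (a, b + 2 * k)} | a b. 0 \<le> a \<and> a \<le> n - 1 \<and> 0 \<le> b \<and> b \<le> n - 1})"

definition N3m1 :: "int \<Rightarrow> (int \<times> int) set set" where
  "N3m1 k = (let n = 3 * k - 1 in
     {{proj n (a, b), proj n (a + k, b), proj n (a + 2 * k - 1, b), proj n (a + 2 * k, b)} | a b. 0 \<le> a \<and> a \<le> n - 1 \<and> 0 \<le> b \<and> b \<le> n - 1}
   \<union> {{proj n (a, b), proj n (a, b + k), proj n (a, b + 2 * k - 1), proj n (a, b + 2 * k)} | a b. 0 \<le> a \<and> a \<le> n - 1 \<and> 0 \<le> b \<and> b \<le> n - 1})"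

end

theory Submission
  imports Defs
begin

lemma mod_eqI': "0 \<le> r \<Longrightarrow> r < (n::int) \<Longrightarrow> a = r + q*n \<Longrightarrow> a mod n = r"
  by simp

lemma cdist_cong:
  "x mod n = x' mod n \<Longrightarrow> y mod n = y' mod n \<Longrightarrow> cdist n x y = cdist n x' y'"
  unfolding cdist_def
  by (simp add: mod_diff_cong[of x n x' y y'] mod_diff_cong[of y n y' x x'])

lemma cdist_sym: "cdist n x y = cdist n y x"
  unfolding cdist_def by simp

lemma cdist_nonneg: "0 < n \<Longrightarrow> 0 \<le> cdist n x y"
  unfolding cdist_def by simp

lemma cdist_char:
  assumes "0 < n" "\<bar>x - y\<bar> \<le> n"
  shows "cdist n x y = min \<bar>x - y\<bar> (n - \<bar>x - y\<bar>)"
proof (cases "x - y = n \<or> y - x = n \<or> x = y")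
  case True
  then show ?thesis using assms unfolding cdist_def by auto
next
  case False
  show ?thesis
  proof (cases "x \<ge> y")
    case True
    have 1: "(x - y) mod n = x - y" using assms True False by (intro mod_eqI'[where q=0]) auto
    have 2: "(y - x) mod n = n - (x - y)" using assms True False by (intro mod_eqI'[where q="-1"]) auto
    show ?thesis unfolding cdist_def 1 2 using True by simp
  next
    case f2: False
    have 1: "(y - x) mod n = y - x" using assms f2 False by (intro mod_eqI'[where q=0]) auto
    have 2: "(x - y) mod n = n - (y - x)" using assms f2 False by (intro mod_eqI'[where q="-1"]) auto
    show ?thesis unfolding cdist_def 1 2 using f2 by (simp add: min.commute)
  qed
qed

lemma cdist_le_abs: "0 < n \<Longrightarrow> cdist n x y \<le> \<bar>x - y\<bar>"
proof -
  assume n: "0 < n"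
  show ?thesis
  proof (cases "x \<ge> y")
    case True
    have "(x - y) mod n \<le> x - y" using True by (intro zmod_le_nonneg_dividend) simp
    then show ?thesis using True unfolding cdist_def by (simp add: min.coboundedI1)
  next
    case False
    have "(y - x) mod n \<le> y - x" using False by (intro zmod_le_nonneg_dividend) simp
    then show ?thesis using False unfolding cdist_def by (simp add: min.coboundedI2)
  qed
qed

lemma cdist_lift: "0 < n \<Longrightarrow> \<exists>j. \<bar>x + j*n - y\<bar> = cdist n x y"
proof -
  assume n: "0 < n"
  have a: "x - ((x - y) div n) * n - y = (x - y) mod n"
    by (simp add: minus_div_mult_eq_mod[symmetric] algebra_simps)
  have b: "x + ((y - x) div n) * n - y = - ((y - x) mod n)"
    by (simp add: minus_div_mult_eq_mod[symmetric] algebra_simps)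
  show ?thesis
  proof (cases "(x - y) mod n \<le> (y - x) mod n")
    case True
    then show ?thesis using a n by (intro exI[of _ "- ((x - y) div n)"]) (simp add: cdist_def min_def)
  next
    case False
    then show ?thesis using b n by (intro exI[of _ "((y - x) div n)"]) (simp add: cdist_def min_def)
  qed
qed

definition uu :: "int \<times> int \<Rightarrow> int" where "uu p = fst p + snd p"
definition vv :: "int \<times> int \<Rightarrow> int" where "vv p = fst p - snd p"
definition Box :: "int \<Rightarrow> int \<Rightarrow> int \<Rightarrow> (int \<times> int) set" where
  "Box u0 v0 k = {p. u0 \<le> uu p \<and> uu p \<le> u0 + k \<and> v0 \<le> vv p \<and> vv p \<le> v0 + k}"

lemma zdist_uv: "zdist p q = max \<bar>uu p - uu q\<bar> \<bar>vv p - vv q\<bar>"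
  unfolding zdist_def uu_def vv_def by arith

lemma uv_point: "(u - v) mod 2 = (0::int) \<Longrightarrow> uu (((u+v) div 2), u - (u+v) div 2) = u \<and> vv (((u+v) div 2), u - (u+v) div 2) = v"
  unfolding uu_def vv_def by simp presburger

lemma box_pt0:
  assumes "(u - w) mod 2 = 0" "u0 \<le> u" "u \<le> u0 + k" "v0 \<le> w" "w \<le> v0 + k"
  shows "\<exists>p \<in> Box u0 v0 k. uu p = u \<and> vv p = w"
  using uv_point[OF assms(1)] assms unfolding Box_def
  by (intro bexI[of _ "(((u+w) div 2), u - (u+w) div 2)"]) auto

lemma box_pt:
  assumes "k \<ge> 1" "u0 \<le> u" "u \<le> u0 + k" "v0 \<le> v" "v \<le> v0 + k"
  shows "\<exists>p \<in> Box u0 v0 k. uu p = u \<and> \<bar>vv p - v\<bar> \<le> 1"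
proof -
  obtain w where w: "v0 \<le> w" "w \<le> v0 + k" "\<bar>w - v\<bar> \<le> 1" "(u - w) mod 2 = 0"
  proof (cases "(u - v) mod 2 = 0")
    case True then show ?thesis using that[of v] assms by auto
  next
    case False
    show ?thesis
    proof (cases "v < v0 + k")
      case True
      have "(u - (v+1)) mod 2 = 0" using False by presburger
      then show ?thesis using that[of "v+1"] assms True by auto
    next
      case f2: False
      have "(u - (v - 1)) mod 2 = 0" using False by presburger
      then show ?thesis using that[of "v - 1"] assms f2 by auto
    qed
  qed
  then show ?thesis using box_pt0[of u w u0 k v0] assms by force
qed

lemma box_pt':
  assumes "k \<ge> 1" "u0 \<le> u" "u \<le> u0 + k" "v0 \<le> v" "v \<le> v0 + k"
  shows "\<exists>p \<in> Box u0 v0 k. vv p = v \<and> \<bar>uu p - u\<bar> \<le> 1"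
proof -
  obtain w where w: "u0 \<le> w" "w \<le> u0 + k" "\<bar>w - u\<bar> \<le> 1" "(w - v) mod 2 = 0"
  proof (cases "(u - v) mod 2 = 0")
    case True then show ?thesis using that[of u] assms by auto
  next
    case False
    show ?thesis
    proof (cases "u < u0 + k")
      case True
      have "((u+1) - v) mod 2 = 0" using False by presburger
      then show ?thesis using that[of "u+1"] assms True by auto
    next
      case f2: False
      have "((u - 1) - v) mod 2 = 0" using False by presburger
      then show ?thesis using that[of "u - 1"] assms f2 by auto
    qed
  qed
  then show ?thesis using box_pt0[of w v u0 k v0] assms by force
qed

lemma box_finite: "finite (Box u0 v0 k)"
proof (rule finite_subset)
  let ?M = "\<bar>u0\<bar> + \<bar>v0\<bar> + \<bar>k\<bar>"
  show "Box u0 v0 k \<subseteq> {-?M..?M} \<times> {-?M..?M}"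
    unfolding Box_def uu_def vv_def by auto
  show "finite ({-?M..?M} \<times> {-?M..?M})" by simp
qed

lemma box_VR: "k \<ge> 1 \<Longrightarrow> Box u0 v0 k \<in> VR UNIV zdist k"
proof -
  assume k: "k \<ge> 1"
  have "Box u0 v0 k \<noteq> {}" using box_pt[OF k, of u0 u0 v0 v0] k by auto
  moreover have "\<forall>x\<in>Box u0 v0 k. \<forall>y\<in>Box u0 v0 k. zdist x y \<le> k"
    unfolding zdist_uv Box_def by auto
  ultimately show ?thesis unfolding VR_def using box_finite by auto
qed

lemma VR_clique: "S \<in> VR X d r \<Longrightarrow> x \<in> S \<Longrightarrow> y \<in> S \<Longrightarrow> d x y \<le> r"
  unfolding VR_def by auto

lemma box_max: "k \<ge> 1 \<Longrightarrow> Box u0 v0 k \<in> maximal_simplices (VR UNIV zdist k)"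
proof -
  assume k: "k \<ge> 1"
  have "T = Box u0 v0 k" if T: "T \<in> VR UNIV zdist k" "Box u0 v0 k \<subseteq> T" for T
  proof
    show "T \<subseteq> Box u0 v0 k"
    proof
      fix t assume t: "t \<in> T"
      obtain p1 where p1: "p1 \<in> Box u0 v0 k" "uu p1 = u0" using box_pt[OF k, of u0 u0 v0 v0] k by auto
      obtain p2 where p2: "p2 \<in> Box u0 v0 k" "uu p2 = u0 + k" using box_pt[OF k, of u0 "u0+k" v0 v0] k by auto
      obtain p3 where p3: "p3 \<in> Box u0 v0 k" "vv p3 = v0" using box_pt'[OF k, of u0 u0 v0 v0] k by auto
      obtain p4 where p4: "p4 \<in> Box u0 v0 k" "vv p4 = v0 + k" using box_pt'[OF k, of u0 u0 v0 "v0+k"] k by auto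
      have "p1 \<in> T" "p2 \<in> T" "p3 \<in> T" "p4 \<in> T" using p1 p2 p3 p4 T(2) by auto
      then have "zdist t p1 \<le> k" "zdist t p2 \<le> k" "zdist t p3 \<le> k" "zdist t p4 \<le> k"
        using VR_clique[OF T(1) t] by auto
      then show "t \<in> Box u0 v0 k" using p1 p2 p3 p4 unfolding zdist_uv Box_def by auto
    qed
  qed (use T in auto)
  then show ?thesis unfolding maximal_simplices_def using box_VR[OF k] by auto
qed

lemma clique_in_box:
  assumes "S \<in> VR UNIV zdist k"
  shows "S \<subseteq> Box (Min (uu ` S)) (Min (vv ` S)) k"
proof
  fix s assume s: "s \<in> S"
  have fin: "finite S" "S \<noteq> {}" using assms unfolding VR_def by auto
  obtain a where a: "a \<in> S" "uu a = Min (uu ` S)" using fin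
    by (metis (no_types, lifting) Min_in finite_imageI image_iff image_is_empty)
  obtain b where b: "b \<in> S" "vv b = Min (vv ` S)" using fin
    by (metis (no_types, lifting) Min_in finite_imageI image_iff image_is_empty)
  have "uu a \<le> uu s" "vv b \<le> vv s" using a b s fin by auto
  moreover have "zdist s a \<le> k" "zdist s b \<le> k" using VR_clique[OF assms] s a b by auto
  ultimately show "s \<in> Box (Min (uu ` S)) (Min (vv ` S)) k"
    using a b unfolding Box_def zdist_uv by auto
qed

lemma max_is_box:
  assumes k: "k \<ge> 1" and C: "C \<in> maximal_simplices (VR UNIV zdist k)"
  shows "\<exists>u0 v0. C = Box u0 v0 k"
proof -
  have C1: "C \<in> VR UNIV zdist k" and C2: "\<forall>T\<in>VR UNIV zdist k. C \<subseteq> T \<longrightarrow> T = C"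
    using C unfolding maximal_simplices_def by auto
  show ?thesis using C2 box_VR[OF k] clique_in_box[OF C1] by blast
qed

lemma VR_I: "S \<subseteq> X \<Longrightarrow> finite S \<Longrightarrow> S \<noteq> {} \<Longrightarrow> (\<And>x y. x \<in> S \<Longrightarrow> y \<in> S \<Longrightarrow> d x y \<le> r) \<Longrightarrow> S \<in> VR X d r"
  unfolding VR_def by auto

lemma proj_torus: "0 < n \<Longrightarrow> proj n p \<in> torus n"
  unfolding proj_def torus_def by auto

lemma torus_proj: "p \<in> torus n \<Longrightarrow> proj n p = p"
  unfolding proj_def torus_def by (cases p) auto

lemma tdist_proj_le: "0 < n \<Longrightarrow> tdist n (proj n p) (proj n q) \<le> zdist p q"
proof -
  assume n: "0 < n"
  have "cdist n (fst p mod n) (fst q mod n) = cdist n (fst p) (fst q)"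
       "cdist n (snd p mod n) (snd q mod n) = cdist n (snd p) (snd q)"
    by (auto intro: cdist_cong)
  then show ?thesis unfolding tdist_def proj_def zdist_def
    using cdist_le_abs[OF n, of "fst p" "fst q"] cdist_le_abs[OF n, of "snd p" "snd q"] by simp
qed

lemma proj_VR:
  assumes n: "0 < n" and C: "C \<in> VR UNIV zdist k"
  shows "proj n ` C \<in> VR (torus n) (tdist n) k"
proof -
  have "tdist n (proj n x) (proj n y) \<le> k" if "x \<in> C" "y \<in> C" for x y
    using tdist_proj_le[OF n, of x y] VR_clique[OF C that] by simp
  then show ?thesis using C proj_torus[OF n] unfolding VR_def by auto
qed

lemma mult_small: "0 < (n::int) \<Longrightarrow> \<bar>m * n\<bar> < c * n \<Longrightarrow> \<bar>m\<bar> < c"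
  by (simp add: abs_mult)

lemma lift_exists:
  assumes n: "0 < n"
  shows "\<exists>j1 j2. zdist (fst p + j1*n, snd p + j2*n) c = tdist n p (proj n c)"
proof -
  obtain j1 where j1: "\<bar>fst p + j1*n - fst c\<bar> = cdist n (fst p) (fst c)" using cdist_lift[OF n] by blast
  obtain j2 where j2: "\<bar>snd p + j2*n - snd c\<bar> = cdist n (snd p) (snd c)" using cdist_lift[OF n] by blast
  have "cdist n (fst p) (fst c mod n) = cdist n (fst p) (fst c)"
       "cdist n (snd p) (snd c mod n) = cdist n (snd p) (snd c)"
    by (auto intro: cdist_cong)
  then show ?thesis using j1 j2 unfolding zdist_def tdist_def proj_def
    by (intro exI[of _ j1] exI[of _ j2]) simp
qed

lemma par_arith: "(s::int) - t = 2*w \<Longrightarrow> \<bar>s\<bar> < 2 \<Longrightarrow> \<bar>t\<bar> < 2 \<Longrightarrow> s = 0 \<or> t = 0 \<Longrightarrow> s = 0 \<and> t = 0"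
  by arith

lemma lift_unique:
  assumes n: "0 < n" and nk: "2*k+2 \<le> n" "3*k < 2*n"
    and q: "zdist (px + j1*n, py + j2*n) c \<le> k" and q': "zdist (px + i1*n, py + i2*n) e \<le> k"
    and ce: "zdist c e \<le> k"
    and d: "\<bar>uu c - uu e\<bar> < n - 2*k \<or> \<bar>vv c - vv e\<bar> < n - 2*k"
  shows "j1 = i1 \<and> j2 = i2"
proof -
  define s where "s = (j1 - i1) + (j2 - i2)"
  define t where "t = (j1 - i1) - (j2 - i2)"
  define X where "X = px + j1*n - fst c"
  define Y where "Y = py + j2*n - snd c"
  define X' where "X' = px + i1*n - fst e"
  define Y' where "Y' = py + i2*n - snd e"
  have q1: "\<bar>X\<bar> + \<bar>Y\<bar> \<le> k" using q unfolding zdist_def X_def Y_def by simp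
  have q2: "\<bar>X'\<bar> + \<bar>Y'\<bar> \<le> k" using q' unfolding zdist_def X'_def Y'_def by simp
  have e1: "s * n - (uu c - uu e) = (X + Y) - (X' + Y')"
    unfolding s_def X_def Y_def X'_def Y'_def uu_def by (simp add: algebra_simps)
  have e2: "t * n - (vv c - vv e) = (X - Y) - (X' - Y')"
    unfolding t_def X_def Y_def X'_def Y'_def vv_def by (simp add: algebra_simps)
  have A: "\<bar>s * n - (uu c - uu e)\<bar> \<le> 2*k" "\<bar>t * n - (vv c - vv e)\<bar> \<le> 2*k"
    unfolding e1 e2 using q1 q2 by linarith+
  have B: "\<bar>uu c - uu e\<bar> \<le> k" "\<bar>vv c - vv e\<bar> \<le> k" using ce unfolding zdist_uv by auto
  have "\<bar>s * n\<bar> < 2 * n" using A B nk by linarith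
  then have s2: "\<bar>s\<bar> < 2" by (rule mult_small[OF n])
  have "\<bar>t * n\<bar> < 2 * n" using A B nk by linarith
  then have t2: "\<bar>t\<bar> < 2" by (rule mult_small[OF n])
  have "s = 0 \<or> t = 0"
  proof (cases "\<bar>uu c - uu e\<bar> < n - 2*k")
    case True
    then have "\<bar>s * n\<bar> < 1 * n" using A B nk by linarith
    then have "\<bar>s\<bar> < 1" by (rule mult_small[OF n])
    then show ?thesis by simp
  next
    case False
    then have "\<bar>t * n\<bar> < 1 * n" using d A B nk by linarith
    then have "\<bar>t\<bar> < 1" by (rule mult_small[OF n])
    then show ?thesis by simp
  qed
  moreover have "s - t = 2 * (j2 - i2)" unfolding s_def t_def by simp
  ultimately have "s = 0 \<and> t = 0" using s2 t2 par_arith by blast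
  then show ?thesis unfolding s_def t_def by auto
qed

lemma proj_box_max:
  assumes n: "0 < n" and nk: "2*k+2 \<le> n" "3*k < 2*n" and k: "k \<ge> 1"
  shows "proj n ` Box u0 v0 k \<in> maximal_simplices (VR (torus n) (tdist n) k)"
proof -
  let ?B = "Box u0 v0 k"
  have BV: "?B \<in> VR UNIV zdist k" using box_VR[OF k] .
  have PV: "proj n ` ?B \<in> VR (torus n) (tdist n) k" using proj_VR[OF n BV] .
  have "T \<subseteq> proj n ` ?B" if T: "T \<in> VR (torus n) (tdist n) k" "proj n ` ?B \<subseteq> T" for T
  proof
    fix p assume pT: "p \<in> T"
    have ptor: "p \<in> torus n" using T(1) pT unfolding VR_def by auto
    have close: "tdist n p (proj n c) \<le> k" if "c \<in> ?B" for c
    proof -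
      have "proj n c \<in> T" using that T(2) by auto
      then show ?thesis using VR_clique[OF T(1) pT] by blast
    qed
    have "\<forall>c. \<exists>j. c \<in> ?B \<longrightarrow> zdist (fst p + fst j*n, snd p + snd j*n) c \<le> k"
    proof
      fix c
      show "\<exists>j. c \<in> ?B \<longrightarrow> zdist (fst p + fst j*n, snd p + snd j*n) c \<le> k"
      proof (cases "c \<in> ?B")
        case True
        obtain j1 j2 where "zdist (fst p + j1*n, snd p + j2*n) c = tdist n p (proj n c)"
          using lift_exists[OF n] by blast
        then show ?thesis using close[OF True] by (intro exI[of _ "(j1,j2)"]) simp
      qed simp
    qed
    then obtain g where g0: "\<forall>c. c \<in> ?B \<longrightarrow> zdist (fst p + fst (g c)*n, snd p + snd (g c)*n) c \<le> k"
      by (rule choice[THEN exE])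
    have g: "\<And>c. c \<in> ?B \<Longrightarrow> zdist (fst p + fst (g c)*n, snd p + snd (g c)*n) c \<le> k"
      using g0 by blast
    obtain c0 where c0: "c0 \<in> ?B" using BV unfolding VR_def by auto
    define q where "q = (fst p + fst (g c0)*n, snd p + snd (g c0)*n)"
    have same: "g c = g e" if "c \<in> ?B" "e \<in> ?B"
       "\<bar>uu c - uu e\<bar> < n - 2*k \<or> \<bar>vv c - vv e\<bar> < n - 2*k" for c e
      using lift_unique[OF n nk g[OF that(1)] g[OF that(2)] VR_clique[OF BV that(1,2)] that(3)]
      by (simp add: prod_eq_iff)
    have qc: "zdist q c \<le> k" if c: "c \<in> ?B" for c
    proof -
      have r: "u0 \<le> uu c0" "uu c0 \<le> u0 + k" "v0 \<le> vv c" "vv c \<le> v0 + k"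
        using c c0 unfolding Box_def by auto
      obtain m where m: "m \<in> ?B" "uu m = uu c0" "\<bar>vv m - vv c\<bar> \<le> 1"
        using box_pt[OF k r] by blast
      have "g m = g c0" using same[OF m(1) c0] m nk by auto
      moreover have "g m = g c" using same[OF m(1) c] m nk by auto
      ultimately show ?thesis using g[OF c] unfolding q_def by simp
    qed
    have qc': "zdist c q \<le> k" if "c \<in> ?B" for c
      using qc[OF that] unfolding zdist_def by (simp add: abs_minus_commute)
    have qq: "zdist q q \<le> k" using k unfolding zdist_def by simp
    have "insert q ?B \<in> VR UNIV zdist k"
    proof (rule VR_I)
      show "finite (insert q ?B)" using box_finite by simp
      fix x y assume "x \<in> insert q ?B" "y \<in> insert q ?B"
      then consider "x = q" "y = q" | "x = q" "y \<in> ?B" | "x \<in> ?B" "y = q" | "x \<in> ?B" "y \<in> ?B"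
        by auto
      then show "zdist x y \<le> k"
        by cases (use qc qc' qq VR_clique[OF BV] in auto)
    qed auto
    then have "q \<in> ?B" using box_max[OF k] unfolding maximal_simplices_def by blast
    moreover have "proj n q = p" unfolding q_def using torus_proj[OF ptor]
      by (simp add: proj_def)
    ultimately show "p \<in> proj n ` ?B" by force
  qed
  then show ?thesis using PV unfolding maximal_simplices_def by auto
qed

lemma cdist_self: "cdist n x x = 0"
  unfolding cdist_def by simp

lemma cdist_modr: "cdist n x (y mod n) = cdist n x y"
  by (rule cdist_cong) simp_all

lemma cdist_modl: "cdist n (x mod n) y = cdist n x y"
  by (rule cdist_cong) simp_all

lemma tdist_proj_r: "tdist n t (proj n p) = cdist n (fst t) (fst p) + cdist n (snd t) (snd p)"
  unfolding tdist_def proj_def by (simp add: cdist_modr)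

lemma tdist_proj_proj: "tdist n (proj n p) (proj n q) = cdist n (fst p) (fst q) + cdist n (snd p) (snd q)"
  unfolding tdist_def proj_def by (simp add: cdist_modr cdist_modl)

lemma mod_range2: "0 < n \<Longrightarrow> 0 \<le> x \<Longrightarrow> x < 2*n \<Longrightarrow> (x < n \<and> x mod (n::int) = x) \<or> (n \<le> x \<and> x mod n = x - n)"
proof -
  assume a: "0 < n" "0 \<le> x" "x < 2*n"
  show ?thesis
  proof (cases "x < n")
    case True then show ?thesis using a by simp
  next
    case False
    have "x mod n = x - n" using a False by (intro mod_eqI'[where q=1]) auto
    then show ?thesis using False by simp
  qed
qed

lemma cand_arith:
  fixes n k t e :: int
  assumes good: "(n = 3*k \<and> k \<ge> 2) \<or> (n = 3*k - 1 \<and> k \<ge> 3)"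
    and r: "0 \<le> t" "t < n" "0 \<le> e"
    and h0: "min t (n - t) + e \<le> k"
    and h1: "min \<bar>t - k\<bar> (n - \<bar>t - k\<bar>) + e \<le> k"
    and h2: "min \<bar>t - 2*k\<bar> (n - \<bar>t - 2*k\<bar>) + e \<le> k"
  shows "e = 0 \<and> (t = 0 \<or> t = k \<or> t = 2*k \<or> (n = 3*k - 1 \<and> (t = 1 \<or> t = 2*k-1)))"
  using assms by arith

lemma cdist_0: "cdist n x y = cdist n (x - y) 0"
  by (simp add: cdist_def)

lemma cdist_shift:
  assumes n: "0 < n" and c: "0 \<le> c" "c \<le> n"
  shows "cdist n sx (z + c) = min \<bar>(sx - z) mod n - c\<bar> (n - \<bar>(sx - z) mod n - c\<bar>)"
proof -
  have "cdist n sx (z + c) = cdist n (sx - z - c) 0" using cdist_0[of n sx "z+c"] by (simp add: diff_diff_eq)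
  also have "\<dots> = cdist n ((sx - z) mod n - c) 0"
    by (rule cdist_cong) (simp_all add: mod_diff_left_eq)
  also have "\<dots> = cdist n ((sx - z) mod n) c" using cdist_0[of n "(sx - z) mod n" c] by simp
  also have "\<dots> = min \<bar>(sx - z) mod n - c\<bar> (n - \<bar>(sx - z) mod n - c\<bar>)"
    using n c pos_mod_bound[OF n, of "sx - z"] pos_mod_sign[OF n, of "sx - z"]
    by (intro cdist_char) auto
  finally show ?thesis .
qed

lemma cand:
  assumes good: "(n = 3*k \<and> k \<ge> 2) \<or> (n = 3*k - 1 \<and> k \<ge> 3)"
    and r: "0 \<le> sx" "sx < n" "0 \<le> sy" "sy < n" "0 \<le> y0" "y0 < n"
    and h0: "cdist n sx z + cdist n sy y0 \<le> k"
    and h1: "cdist n sx (z+k) + cdist n sy y0 \<le> k"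
    and h2: "cdist n sx (z+2*k) + cdist n sy y0 \<le> k"
  shows "sy = y0 \<and> (sx = z mod n \<or> sx = (z+k) mod n \<or> sx = (z+2*k) mod n \<or>
           (n = 3*k-1 \<and> (sx = (z+1) mod n \<or> sx = (z+2*k-1) mod n)))"
proof -
  have n: "0 < n" using good by auto
  define t where "t = (sx - z) mod n"
  have t: "0 \<le> t" "t < n" using n by (auto simp: t_def)
  define e where "e = cdist n sy y0"
  have e: "e = min \<bar>sy - y0\<bar> (n - \<bar>sy - y0\<bar>)" unfolding e_def using r n by (intro cdist_char) auto
  have e0: "0 \<le> e" using e r by auto
  have c0: "cdist n sx z = min t (n - t)"
    using cdist_shift[OF n, of 0 sx z] n t unfolding t_def by simp
  have c1: "cdist n sx (z+k) = min \<bar>t - k\<bar> (n - \<bar>t - k\<bar>)"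
    using cdist_shift[OF n, of k sx z] good unfolding t_def by auto
  have c2: "cdist n sx (z+2*k) = min \<bar>t - 2*k\<bar> (n - \<bar>t - 2*k\<bar>)"
    using cdist_shift[OF n, of "2*k" sx z] good unfolding t_def by auto
  have A: "e = 0 \<and> (t = 0 \<or> t = k \<or> t = 2*k \<or> (n = 3*k - 1 \<and> (t = 1 \<or> t = 2*k-1)))"
    apply (rule cand_arith[OF good t e0])
    using h0 c0 apply (simp add: e_def)
    using h1 c1 apply (simp add: e_def)
    using h2 c2 apply (simp add: e_def)
    done
  have "sy = y0" using A e r by auto
  moreover have sxe: "sx = (z + t) mod n"
  proof -
    have "(z + t) mod n = (z + (sx - z)) mod n" unfolding t_def by (simp add: mod_add_right_eq)
    then show ?thesis using r by simp
  qed
  ultimately show ?thesis using A by (auto simp: add_diff_eq)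
qed

definition R3 :: "int \<Rightarrow> int \<Rightarrow> int \<Rightarrow> int \<Rightarrow> (int \<times> int) set" where
  "R3 n k z y = {proj n (z,y), proj n (z+k,y), proj n (z+2*k,y)}"
definition C3 :: "int \<Rightarrow> int \<Rightarrow> int \<Rightarrow> int \<Rightarrow> (int \<times> int) set" where
  "C3 n k x z = {proj n (x,z), proj n (x,z+k), proj n (x,z+2*k)}"
definition R4 :: "int \<Rightarrow> int \<Rightarrow> int \<Rightarrow> int \<Rightarrow> (int \<times> int) set" where
  "R4 n k z y = {proj n (z,y), proj n (z+k,y), proj n (z+2*k-1,y), proj n (z+2*k,y)}"
definition C4 :: "int \<Rightarrow> int \<Rightarrow> int \<Rightarrow> int \<Rightarrow> (int \<times> int) set" where
  "C4 n k x z = {proj n (x,z), proj n (x,z+k), proj n (x,z+2*k-1), proj n (x,z+2*k)}"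

lemma torus_D: "t \<in> torus n \<Longrightarrow> 0 \<le> fst t \<and> fst t < n \<and> 0 \<le> snd t \<and> snd t < n"
  unfolding torus_def by auto

lemma row_pt: "t \<in> torus n \<Longrightarrow> snd t = y0 \<Longrightarrow> fst t = x mod n \<Longrightarrow> 0 \<le> y0 \<Longrightarrow> y0 < n \<Longrightarrow> t = proj n (x, y0)"
  by (cases t) (simp add: proj_def)

lemma col_pt: "t \<in> torus n \<Longrightarrow> fst t = x0 \<Longrightarrow> snd t = y mod n \<Longrightarrow> 0 \<le> x0 \<Longrightarrow> x0 < n \<Longrightarrow> t = proj n (x0, y)"
  by (cases t) (simp add: proj_def)

lemma row_close: "0 < n \<Longrightarrow> \<bar>a - b\<bar> \<le> n \<Longrightarrow> min \<bar>a - b\<bar> (n - \<bar>a - b\<bar>) \<le> k \<Longrightarrow> tdist n (proj n (a, y)) (proj n (b, y)) \<le> k"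
  by (simp add: tdist_proj_proj cdist_self cdist_char)

lemma col_close: "0 < n \<Longrightarrow> \<bar>a - b\<bar> \<le> n \<Longrightarrow> min \<bar>a - b\<bar> (n - \<bar>a - b\<bar>) \<le> k \<Longrightarrow> tdist n (proj n (y, a)) (proj n (y, b)) \<le> k"
  by (simp add: tdist_proj_proj cdist_self cdist_char)


lemma near3_row:
  assumes good: "(n = 3*k \<and> k \<ge> 2) \<or> (n = 3*k - 1 \<and> k \<ge> 3)"
    and T: "T \<in> VR (torus n) (tdist n) k" and t: "t \<in> T" and y0: "0 \<le> y0" "y0 < n"
    and P: "proj n (z,y0) \<in> T" "proj n (z+k,y0) \<in> T" "proj n (z+2*k,y0) \<in> T"
  shows "snd t = y0 \<and> (fst t = z mod n \<or> fst t = (z+k) mod n \<or> fst t = (z+2*k) mod n \<or>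
           (n = 3*k-1 \<and> (fst t = (z+1) mod n \<or> fst t = (z+2*k-1) mod n)))"
proof -
  have tt: "t \<in> torus n" using T t unfolding VR_def by auto
  have h: "tdist n t (proj n (z,y0)) \<le> k" "tdist n t (proj n (z+k,y0)) \<le> k" "tdist n t (proj n (z+2*k,y0)) \<le> k"
    using VR_clique[OF T t] P by auto
  have h': "cdist n (fst t) z + cdist n (snd t) y0 \<le> k" "cdist n (fst t) (z+k) + cdist n (snd t) y0 \<le> k"
     "cdist n (fst t) (z+2*k) + cdist n (snd t) y0 \<le> k"
    using h unfolding tdist_proj_r by simp_all
  have r: "0 \<le> fst t" "fst t < n" "0 \<le> snd t" "snd t < n" using torus_D[OF tt] by auto
  show ?thesis by (rule cand[OF good r y0 h'])
qed

lemma near3_col: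
  assumes good: "(n = 3*k \<and> k \<ge> 2) \<or> (n = 3*k - 1 \<and> k \<ge> 3)"
    and T: "T \<in> VR (torus n) (tdist n) k" and t: "t \<in> T" and x0: "0 \<le> x0" "x0 < n"
    and P: "proj n (x0,z) \<in> T" "proj n (x0,z+k) \<in> T" "proj n (x0,z+2*k) \<in> T"
  shows "fst t = x0 \<and> (snd t = z mod n \<or> snd t = (z+k) mod n \<or> snd t = (z+2*k) mod n \<or>
           (n = 3*k-1 \<and> (snd t = (z+1) mod n \<or> snd t = (z+2*k-1) mod n)))"
proof -
  have tt: "t \<in> torus n" using T t unfolding VR_def by auto
  have h: "tdist n t (proj n (x0,z)) \<le> k" "tdist n t (proj n (x0,z+k)) \<le> k" "tdist n t (proj n (x0,z+2*k)) \<le> k"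
    using VR_clique[OF T t] P by auto
  have h': "cdist n (snd t) z + cdist n (fst t) x0 \<le> k" "cdist n (snd t) (z+k) + cdist n (fst t) x0 \<le> k"
     "cdist n (snd t) (z+2*k) + cdist n (fst t) x0 \<le> k"
    using h unfolding tdist_proj_r by (simp_all add: add.commute)
  have r: "0 \<le> fst t" "fst t < n" "0 \<le> snd t" "snd t < n" using torus_D[OF tt] by auto
  show ?thesis by (rule cand[OF good r(3,4,1,2) x0 h'])
qed

lemma tdist_sym: "tdist n p q = tdist n q p"
  unfolding tdist_def using cdist_sym by metis

lemma tdist_self: "tdist n p p = 0"
  unfolding tdist_def by (simp add: cdist_self)

lemma VR3:
  assumes "a \<in> torus n" "b \<in> torus n" "c \<in> torus n" "0 \<le> k"
    "tdist n a b \<le> k" "tdist n a c \<le> k" "tdist n b c \<le> k"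
  shows "{a,b,c} \<in> VR (torus n) (tdist n) k"
proof (rule VR_I)
  fix x y assume "x \<in> {a,b,c}" "y \<in> {a,b,c}"
  moreover have "tdist n b a \<le> k" "tdist n c a \<le> k" "tdist n c b \<le> k"
    using assms tdist_sym[of n b a] tdist_sym[of n c a] tdist_sym[of n c b] by auto
  moreover have "tdist n a a \<le> k" "tdist n b b \<le> k" "tdist n c c \<le> k"
    using assms tdist_self[of n] by auto
  ultimately show "tdist n x y \<le> k" using assms by auto
qed (use assms in auto)

lemma VR4:
  assumes "a \<in> torus n" "b \<in> torus n" "c \<in> torus n" "d \<in> torus n" "0 \<le> k"
    "tdist n a b \<le> k" "tdist n a c \<le> k" "tdist n a d \<le> k"
    "tdist n b c \<le> k" "tdist n b d \<le> k" "tdist n c d \<le> k"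
  shows "{a,b,c,d} \<in> VR (torus n) (tdist n) k"
proof (rule VR_I)
  fix x y assume "x \<in> {a,b,c,d}" "y \<in> {a,b,c,d}"
  moreover have "tdist n b a \<le> k" "tdist n c a \<le> k" "tdist n c b \<le> k"
     "tdist n d a \<le> k" "tdist n d b \<le> k" "tdist n d c \<le> k"
    using assms tdist_sym[of n b a] tdist_sym[of n c a] tdist_sym[of n c b]
      tdist_sym[of n d a] tdist_sym[of n d b] tdist_sym[of n d c] by auto
  moreover have "tdist n a a \<le> k" "tdist n b b \<le> k" "tdist n c c \<le> k" "tdist n d d \<le> k"
    using assms tdist_self[of n] by auto
  ultimately show "tdist n x y \<le> k" using assms by auto
qed (use assms in auto)

lemma cd_ok: "0 < n \<Longrightarrow> \<bar>a - b\<bar> \<le> k \<or> (\<bar>a - b\<bar> \<le> n \<and> n - \<bar>a - b\<bar> \<le> k) \<Longrightarrow> cdist n a b \<le> k"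
  using cdist_char[of n a b] cdist_le_abs[of n a b] by auto

lemma rowpair: "0 < n \<Longrightarrow> \<bar>a - b\<bar> \<le> k \<or> (\<bar>a - b\<bar> \<le> n \<and> n - \<bar>a - b\<bar> \<le> k) \<Longrightarrow> tdist n (proj n (a, y)) (proj n (b, y)) \<le> k"
  using cd_ok[of n a b k] by (simp add: tdist_proj_proj cdist_self)

lemma colpair: "0 < n \<Longrightarrow> \<bar>a - b\<bar> \<le> k \<or> (\<bar>a - b\<bar> \<le> n \<and> n - \<bar>a - b\<bar> \<le> k) \<Longrightarrow> tdist n (proj n (y, a)) (proj n (y, b)) \<le> k"
  using cd_ok[of n a b k] by (simp add: tdist_proj_proj cdist_self)

lemma R3_VR: assumes "n = 3*k" "k \<ge> 2" shows "R3 n k z y \<in> VR (torus n) (tdist n) k"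
proof -
  have n: "0 < n" using assms by simp
  show ?thesis unfolding R3_def
    by (rule VR3; (rule proj_torus[OF n])?; (rule rowpair[OF n])?) (use assms in simp_all)
qed

lemma C3_VR: assumes "n = 3*k" "k \<ge> 2" shows "C3 n k x z \<in> VR (torus n) (tdist n) k"
proof -
  have n: "0 < n" using assms by simp
  show ?thesis unfolding C3_def
    by (rule VR3; (rule proj_torus[OF n])?; (rule colpair[OF n])?) (use assms in simp_all)
qed

lemma R4_VR: assumes "n = 3*k - 1" "k \<ge> 3" shows "R4 n k z y \<in> VR (torus n) (tdist n) k"
proof -
  have n: "0 < n" using assms by simp
  show ?thesis unfolding R4_def
    by (rule VR4; (rule proj_torus[OF n])?; (rule rowpair[OF n])?) (use assms in simp_all)
qed

lemma C4_VR: assumes "n = 3*k - 1" "k \<ge> 3" shows "C4 n k x z \<in> VR (torus n) (tdist n) k"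
proof -
  have n: "0 < n" using assms by simp
  show ?thesis unfolding C4_def
    by (rule VR4; (rule proj_torus[OF n])?; (rule colpair[OF n])?) (use assms in simp_all)
qed

lemma maxI:
  assumes "E \<in> VR X d r" "\<And>T t. T \<in> VR X d r \<Longrightarrow> E \<subseteq> T \<Longrightarrow> t \<in> T \<Longrightarrow> t \<in> E"
  shows "E \<in> maximal_simplices (VR X d r)"
  using assms unfolding maximal_simplices_def by blast

lemma far_row: "n = 3*k - 1 \<Longrightarrow> k \<ge> 3 \<Longrightarrow> tdist n (proj n (z+1, y)) (proj n (z+2*k-1, y)) = k + 1"
  by (simp add: tdist_proj_proj cdist_self cdist_char)

lemma far_col: "n = 3*k - 1 \<Longrightarrow> k \<ge> 3 \<Longrightarrow> tdist n (proj n (x, z+1)) (proj n (x, z+2*k-1)) = k + 1"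
  by (simp add: tdist_proj_proj cdist_self cdist_char)

lemma R3_max:
  assumes nk: "n = 3*k" "k \<ge> 2" and y: "0 \<le> y" "y < n"
  shows "R3 n k z y \<in> maximal_simplices (VR (torus n) (tdist n) k)"
proof (rule maxI[OF R3_VR[OF nk]])
  fix T t assume T: "T \<in> VR (torus n) (tdist n) k" "R3 n k z y \<subseteq> T" and t: "t \<in> T"
  have good: "(n = 3*k \<and> k \<ge> 2) \<or> (n = 3*k - 1 \<and> k \<ge> 3)" using nk by simp
  have tt: "t \<in> torus n" using T t unfolding VR_def by auto
  have P: "proj n (z,y) \<in> T" "proj n (z+k,y) \<in> T" "proj n (z+2*k,y) \<in> T" using T(2) unfolding R3_def by auto
  have "snd t = y \<and> (fst t = z mod n \<or> fst t = (z+k) mod n \<or> fst t = (z+2*k) mod n)"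
    using near3_row[OF good T(1) t y P] nk by auto
  then show "t \<in> R3 n k z y" unfolding R3_def using row_pt[OF tt _ _ y] by blast
qed

lemma C3_max:
  assumes nk: "n = 3*k" "k \<ge> 2" and x: "0 \<le> x" "x < n"
  shows "C3 n k x z \<in> maximal_simplices (VR (torus n) (tdist n) k)"
proof (rule maxI[OF C3_VR[OF nk]])
  fix T t assume T: "T \<in> VR (torus n) (tdist n) k" "C3 n k x z \<subseteq> T" and t: "t \<in> T"
  have good: "(n = 3*k \<and> k \<ge> 2) \<or> (n = 3*k - 1 \<and> k \<ge> 3)" using nk by simp
  have tt: "t \<in> torus n" using T t unfolding VR_def by auto
  have P: "proj n (x,z) \<in> T" "proj n (x,z+k) \<in> T" "proj n (x,z+2*k) \<in> T" using T(2) unfolding C3_def by auto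
  have "fst t = x \<and> (snd t = z mod n \<or> snd t = (z+k) mod n \<or> snd t = (z+2*k) mod n)"
    using near3_col[OF good T(1) t x P] nk by auto
  then show "t \<in> C3 n k x z" unfolding C3_def using col_pt[OF tt _ _ x] by blast
qed

lemma R4_max:
  assumes nk: "n = 3*k - 1" "k \<ge> 3" and y: "0 \<le> y" "y < n"
  shows "R4 n k z y \<in> maximal_simplices (VR (torus n) (tdist n) k)"
proof (rule maxI[OF R4_VR[OF nk]])
  fix T t assume T: "T \<in> VR (torus n) (tdist n) k" "R4 n k z y \<subseteq> T" and t: "t \<in> T"
  have good: "(n = 3*k \<and> k \<ge> 2) \<or> (n = 3*k - 1 \<and> k \<ge> 3)" using nk by simp
  have tt: "t \<in> torus n" using T t unfolding VR_def by auto
  have P: "proj n (z,y) \<in> T" "proj n (z+k,y) \<in> T" "proj n (z+2*k,y) \<in> T" "proj n (z+2*k-1,y) \<in> T"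
    using T(2) unfolding R4_def by auto
  have A: "snd t = y \<and> (fst t = z mod n \<or> fst t = (z+k) mod n \<or> fst t = (z+2*k) mod n \<or>
           (fst t = (z+1) mod n \<or> fst t = (z+2*k-1) mod n))"
    using near3_row[OF good T(1) t y P(1-3)] by auto
  have "fst t \<noteq> (z+1) mod n"
  proof
    assume "fst t = (z+1) mod n"
    then have "t = proj n (z+1, y)" using row_pt[OF tt _ _ y] A by blast
    then have "tdist n (proj n (z+1, y)) (proj n (z+2*k-1, y)) \<le> k" using VR_clique[OF T(1) t P(4)] by simp
    then show False using far_row[OF nk] by simp
  qed
  then show "t \<in> R4 n k z y" unfolding R4_def using A row_pt[OF tt _ _ y] by blast
qed

lemma C4_max:
  assumes nk: "n = 3*k - 1" "k \<ge> 3" and x: "0 \<le> x" "x < n"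
  shows "C4 n k x z \<in> maximal_simplices (VR (torus n) (tdist n) k)"
proof (rule maxI[OF C4_VR[OF nk]])
  fix T t assume T: "T \<in> VR (torus n) (tdist n) k" "C4 n k x z \<subseteq> T" and t: "t \<in> T"
  have good: "(n = 3*k \<and> k \<ge> 2) \<or> (n = 3*k - 1 \<and> k \<ge> 3)" using nk by simp
  have tt: "t \<in> torus n" using T t unfolding VR_def by auto
  have P: "proj n (x,z) \<in> T" "proj n (x,z+k) \<in> T" "proj n (x,z+2*k) \<in> T" "proj n (x,z+2*k-1) \<in> T"
    using T(2) unfolding C4_def by auto
  have A: "fst t = x \<and> (snd t = z mod n \<or> snd t = (z+k) mod n \<or> snd t = (z+2*k) mod n \<or>
           (snd t = (z+1) mod n \<or> snd t = (z+2*k-1) mod n))"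
    using near3_col[OF good T(1) t x P(1-3)] by auto
  have "snd t \<noteq> (z+1) mod n"
  proof
    assume "snd t = (z+1) mod n"
    then have "t = proj n (x, z+1)" using col_pt[OF tt _ _ x] A by blast
    then have "tdist n (proj n (x, z+1)) (proj n (x, z+2*k-1)) \<le> k" using VR_clique[OF T(1) t P(4)] by simp
    then show False using far_col[OF nk] by simp
  qed
  then show "t \<in> C4 n k x z" unfolding C4_def using A col_pt[OF tt _ _ x] by blast
qed

lemma N3_max:
  assumes k: "k \<ge> 2" and E: "E \<in> N3 k"
  shows "E \<in> maximal_simplices (VR (torus (3*k)) (tdist (3*k)) k)"
proof -
  obtain a b where ab: "0 \<le> a" "a \<le> 3*k - 1" "0 \<le> b" "b \<le> 3*k - 1"
    and "E = R3 (3*k) k a b \<or> E = C3 (3*k) k a b"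
    using E unfolding N3_def Let_def R3_def C3_def by blast
  then show ?thesis using R3_max[of "3*k" k b a] C3_max[of "3*k" k a b] k by auto
qed

lemma N3m1_max:
  assumes k: "k \<ge> 3" and E: "E \<in> N3m1 k"
  shows "E \<in> maximal_simplices (VR (torus (3*k-1)) (tdist (3*k-1)) k)"
proof -
  obtain a b where ab: "0 \<le> a" "a \<le> 3*k-1 - 1" "0 \<le> b" "b \<le> 3*k-1 - 1"
    and "E = R4 (3*k-1) k a b \<or> E = C4 (3*k-1) k a b"
    using E unfolding N3m1_def Let_def R4_def C4_def by blast
  then show ?thesis using R4_max[of "3*k-1" k b a] C4_max[of "3*k-1" k a b] k by auto
qed

lemma proj_modl: "proj n (x mod n + c, y) = proj n (x + c, y)"
  by (simp add: proj_def mod_add_left_eq)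

lemma proj_modr: "proj n (y, x mod n + c) = proj n (y, x + c)"
  by (simp add: proj_def mod_add_left_eq)

lemma proj_mod0l: "proj n (x mod n, y) = proj n (x, y)"
  by (simp add: proj_def)

lemma proj_mod0r: "proj n (y, x mod n) = proj n (y, x)"
  by (simp add: proj_def)

lemma R3_N3: assumes "0 \<le> y" "y < 3*k" shows "R3 (3*k) k z y \<in> N3 k"
proof -
  let ?n = "3*k"
  have eq: "R3 ?n k z y = {proj ?n (z mod ?n, y), proj ?n (z mod ?n + k, y), proj ?n (z mod ?n + 2*k, y)}"
    unfolding R3_def by (simp add: proj_modl proj_mod0l)
  have np: "0 < ?n" using assms by simp
  have bd: "0 \<le> z mod ?n" "z mod ?n \<le> ?n - 1" using pos_mod_bound[OF np, of z] pos_mod_sign[OF np, of z] by auto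
  show ?thesis unfolding N3_def Let_def
    by (intro UnI1 CollectI exI[of _ "z mod ?n"] exI[of _ y]) (use eq bd assms in simp)
qed

lemma C3_N3: assumes "0 \<le> x" "x < 3*k" shows "C3 (3*k) k x z \<in> N3 k"
proof -
  let ?n = "3*k"
  have eq: "C3 ?n k x z = {proj ?n (x, z mod ?n), proj ?n (x, z mod ?n + k), proj ?n (x, z mod ?n + 2*k)}"
    unfolding C3_def by (simp add: proj_modr proj_mod0r)
  have np: "0 < ?n" using assms by simp
  have bd: "0 \<le> z mod ?n" "z mod ?n \<le> ?n - 1" using pos_mod_bound[OF np, of z] pos_mod_sign[OF np, of z] by auto
  show ?thesis unfolding N3_def Let_def
    by (intro UnI2 CollectI exI[of _ x] exI[of _ "z mod ?n"]) (use eq bd assms in simp)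
qed

lemma R4_N3m1: assumes "0 \<le> y" "y < 3*k-1" shows "R4 (3*k-1) k z y \<in> N3m1 k"
proof -
  let ?n = "3*k-1"
  have e: "z mod ?n + 2*k - 1 = z mod ?n + (2*k - 1)" "z + 2*k - 1 = z + (2*k - 1)" by simp_all
  have eq: "R4 ?n k z y = {proj ?n (z mod ?n, y), proj ?n (z mod ?n + k, y), proj ?n (z mod ?n + 2*k - 1, y), proj ?n (z mod ?n + 2*k, y)}"
    unfolding R4_def e by (simp only: proj_modl proj_mod0l)
  have np: "0 < ?n" using assms by simp
  have bd: "0 \<le> z mod ?n" "z mod ?n \<le> ?n - 1" using pos_mod_bound[OF np, of z] pos_mod_sign[OF np, of z] by auto
  show ?thesis unfolding N3m1_def Let_def
    by (intro UnI1 CollectI exI[of _ "z mod ?n"] exI[of _ y]) (use eq bd assms in simp)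
qed

lemma C4_N3m1: assumes "0 \<le> x" "x < 3*k-1" shows "C4 (3*k-1) k x z \<in> N3m1 k"
proof -
  let ?n = "3*k-1"
  have e: "z mod ?n + 2*k - 1 = z mod ?n + (2*k - 1)" "z + 2*k - 1 = z + (2*k - 1)" by simp_all
  have eq: "C4 ?n k x z = {proj ?n (x, z mod ?n), proj ?n (x, z mod ?n + k), proj ?n (x, z mod ?n + 2*k - 1), proj ?n (x, z mod ?n + 2*k)}"
    unfolding C4_def e by (simp only: proj_modr proj_mod0r)
  have np: "0 < ?n" using assms by simp
  have bd: "0 \<le> z mod ?n" "z mod ?n \<le> ?n - 1" using pos_mod_bound[OF np, of z] pos_mod_sign[OF np, of z] by auto
  show ?thesis unfolding N3m1_def Let_def
    by (intro UnI2 CollectI exI[of _ x] exI[of _ "z mod ?n"]) (use eq bd assms in simp)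
qed

lemma finish_row:
  assumes good: "(n = 3*k \<and> k \<ge> 2) \<or> (n = 3*k - 1 \<and> k \<ge> 3)"
    and S: "S \<in> maximal_simplices (VR (torus n) (tdist n) k)" and y: "0 \<le> y0" "y0 < n"
    and P: "proj n (z,y0) \<in> S" "proj n (z+k,y0) \<in> S" "proj n (z+2*k,y0) \<in> S"
  shows "S \<in> (if n = 3*k then N3 k else N3m1 k)"
proof -
  have SV: "S \<in> VR (torus n) (tdist n) k" using S unfolding maximal_simplices_def by auto
  have Smax: "\<And>T. T \<in> VR (torus n) (tdist n) k \<Longrightarrow> S \<subseteq> T \<Longrightarrow> T = S"
    using S unfolding maximal_simplices_def by auto
  have tt: "\<And>t. t \<in> S \<Longrightarrow> t \<in> torus n" using SV unfolding VR_def by auto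
  have near: "\<And>t. t \<in> S \<Longrightarrow> snd t = y0 \<and> (fst t = z mod n \<or> fst t = (z+k) mod n \<or> fst t = (z+2*k) mod n \<or>
           (n = 3*k-1 \<and> (fst t = (z+1) mod n \<or> fst t = (z+2*k-1) mod n)))"
    using near3_row[OF good SV _ y P] by blast
  have pt: "\<And>t x. t \<in> S \<Longrightarrow> snd t = y0 \<Longrightarrow> fst t = x mod n \<Longrightarrow> t = proj n (x, y0)"
    using row_pt[OF tt _ _ y] by blast
  show ?thesis
  proof (cases "n = 3*k")
    case True
    have k2: "k \<ge> 2" using good True by auto
    have "S \<subseteq> R3 n k z y0"
    proof
      fix t assume t: "t \<in> S"
      have "snd t = y0 \<and> (fst t = z mod n \<or> fst t = (z+k) mod n \<or> fst t = (z+2*k) mod n)"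
        using near[OF t] True by auto
      then show "t \<in> R3 n k z y0" unfolding R3_def using pt[OF t] by blast
    qed
    then have "R3 n k z y0 = S" using Smax R3_VR[OF True k2] by blast
    moreover have "R3 n k z y0 \<in> N3 k" using R3_N3[of y0 k z] y True by simp
    ultimately show ?thesis using True by simp
  next
    case False
    then have nk: "n = 3*k-1" "k \<ge> 3" using good by auto
    have e1: "z + k + 2*k - 1 = z + n" "z + k + 2*k = (z + 1) + n" "z + k + k = z + 2*k" using nk by simp_all
    have shift: "proj n (z + k + 2*k - 1, y0) = proj n (z, y0)" "proj n (z + k + 2*k, y0) = proj n (z+1, y0)"
      "proj n (z + k + k, y0) = proj n (z + 2*k, y0)"
      unfolding e1 by (simp_all add: proj_def)
    show ?thesis
    proof (cases "proj n (z+1, y0) \<in> S")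
      case True
      have no: "proj n (z+2*k-1, y0) \<notin> S"
      proof
        assume "proj n (z+2*k-1, y0) \<in> S"
        then have "tdist n (proj n (z+1,y0)) (proj n (z+2*k-1,y0)) \<le> k" using VR_clique[OF SV True] by simp
        then show False using far_row[OF nk] by simp
      qed
      have "S \<subseteq> R4 n k (z+k) y0"
      proof
        fix t assume t: "t \<in> S"
        have "t = proj n (z, y0) \<or> t = proj n (z+k, y0) \<or> t = proj n (z+2*k, y0) \<or> t = proj n (z+1, y0) \<or> t = proj n (z+2*k-1,y0)"
          using near[OF t] pt[OF t] by blast
        then have "t = proj n (z, y0) \<or> t = proj n (z+k, y0) \<or> t = proj n (z+2*k, y0) \<or> t = proj n (z+1, y0)"
          using no t by blast
        then show "t \<in> R4 n k (z+k) y0" unfolding R4_def shift by blast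
      qed
      then have "R4 n k (z+k) y0 = S" using Smax R4_VR[OF nk] by blast
      moreover have "R4 n k (z+k) y0 \<in> N3m1 k" using R4_N3m1[of y0 k "z+k"] y nk by simp
      ultimately show ?thesis using False by simp
    next
      case f2: False
      have "S \<subseteq> R4 n k z y0"
      proof
        fix t assume t: "t \<in> S"
        have "t = proj n (z, y0) \<or> t = proj n (z+k, y0) \<or> t = proj n (z+2*k, y0) \<or> t = proj n (z+1, y0) \<or> t = proj n (z+2*k-1,y0)"
          using near[OF t] pt[OF t] by blast
        then have "t = proj n (z, y0) \<or> t = proj n (z+k, y0) \<or> t = proj n (z+2*k, y0) \<or> t = proj n (z+2*k-1, y0)"
          using f2 t by blast
        then show "t \<in> R4 n k z y0" unfolding R4_def by blast
      qed
      then have "R4 n k z y0 = S" using Smax R4_VR[OF nk] by blast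
      moreover have "R4 n k z y0 \<in> N3m1 k" using R4_N3m1[of y0 k z] y nk by simp
      ultimately show ?thesis using False by simp
    qed
  qed
qed

lemma finish_col:
  assumes good: "(n = 3*k \<and> k \<ge> 2) \<or> (n = 3*k - 1 \<and> k \<ge> 3)"
    and S: "S \<in> maximal_simplices (VR (torus n) (tdist n) k)" and y: "0 \<le> x0" "x0 < n"
    and P: "proj n (x0,z) \<in> S" "proj n (x0,z+k) \<in> S" "proj n (x0,z+2*k) \<in> S"
  shows "S \<in> (if n = 3*k then N3 k else N3m1 k)"
proof -
  have SV: "S \<in> VR (torus n) (tdist n) k" using S unfolding maximal_simplices_def by auto
  have Smax: "\<And>T. T \<in> VR (torus n) (tdist n) k \<Longrightarrow> S \<subseteq> T \<Longrightarrow> T = S"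
    using S unfolding maximal_simplices_def by auto
  have tt: "\<And>t. t \<in> S \<Longrightarrow> t \<in> torus n" using SV unfolding VR_def by auto
  have near: "\<And>t. t \<in> S \<Longrightarrow> fst t = x0 \<and> (snd t = z mod n \<or> snd t = (z+k) mod n \<or> snd t = (z+2*k) mod n \<or>
           (n = 3*k-1 \<and> (snd t = (z+1) mod n \<or> snd t = (z+2*k-1) mod n)))"
    using near3_col[OF good SV _ y P] by blast
  have pt: "\<And>t x. t \<in> S \<Longrightarrow> fst t = x0 \<Longrightarrow> snd t = x mod n \<Longrightarrow> t = proj n (x0, x)"
    using col_pt[OF tt _ _ y] by blast
  show ?thesis
  proof (cases "n = 3*k")
    case True
    have k2: "k \<ge> 2" using good True by auto
    have "S \<subseteq> C3 n k x0 z"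
    proof
      fix t assume t: "t \<in> S"
      have "fst t = x0 \<and> (snd t = z mod n \<or> snd t = (z+k) mod n \<or> snd t = (z+2*k) mod n)"
        using near[OF t] True by auto
      then show "t \<in> C3 n k x0 z" unfolding C3_def using pt[OF t] by blast
    qed
    then have "C3 n k x0 z = S" using Smax C3_VR[OF True k2] by blast
    moreover have "C3 n k x0 z \<in> N3 k" using C3_N3[of x0 k z] y True by simp
    ultimately show ?thesis using True by simp
  next
    case False
    then have nk: "n = 3*k-1" "k \<ge> 3" using good by auto
    have e1: "z + k + 2*k - 1 = z + n" "z + k + 2*k = (z + 1) + n" "z + k + k = z + 2*k" using nk by simp_all
    have shift: "proj n (x0, z + k + 2*k - 1) = proj n (x0, z)" "proj n (x0, z + k + 2*k) = proj n (x0, z+1)"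
      "proj n (x0, z + k + k) = proj n (x0, z + 2*k)"
      unfolding e1 by (simp_all add: proj_def)
    show ?thesis
    proof (cases "proj n (x0, z+1) \<in> S")
      case True
      have no: "proj n (x0, z+2*k-1) \<notin> S"
      proof
        assume "proj n (x0, z+2*k-1) \<in> S"
        then have "tdist n (proj n (x0,z+1)) (proj n (x0,z+2*k-1)) \<le> k" using VR_clique[OF SV True] by simp
        then show False using far_col[OF nk] by simp
      qed
      have "S \<subseteq> C4 n k x0 (z+k)"
      proof
        fix t assume t: "t \<in> S"
        have "t = proj n (x0, z) \<or> t = proj n (x0, z+k) \<or> t = proj n (x0, z+2*k) \<or> t = proj n (x0, z+1) \<or> t = proj n (x0,z+2*k-1)"
          using near[OF t] pt[OF t] by blast
        then have "t = proj n (x0, z) \<or> t = proj n (x0, z+k) \<or> t = proj n (x0, z+2*k) \<or> t = proj n (x0, z+1)"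
          using no t by blast
        then show "t \<in> C4 n k x0 (z+k)" unfolding C4_def shift by blast
      qed
      then have "C4 n k x0 (z+k) = S" using Smax C4_VR[OF nk] by blast
      moreover have "C4 n k x0 (z+k) \<in> N3m1 k" using C4_N3m1[of x0 k "z+k"] y nk by simp
      ultimately show ?thesis using False by simp
    next
      case f2: False
      have "S \<subseteq> C4 n k x0 z"
      proof
        fix t assume t: "t \<in> S"
        have "t = proj n (x0, z) \<or> t = proj n (x0, z+k) \<or> t = proj n (x0, z+2*k) \<or> t = proj n (x0, z+1) \<or> t = proj n (x0,z+2*k-1)"
          using near[OF t] pt[OF t] by blast
        then have "t = proj n (x0, z) \<or> t = proj n (x0, z+k) \<or> t = proj n (x0, z+2*k) \<or> t = proj n (x0, z+2*k-1)"
          using f2 t by blast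
        then show "t \<in> C4 n k x0 z" unfolding C4_def by blast
      qed
      then have "C4 n k x0 z = S" using Smax C4_VR[OF nk] by blast
      moreover have "C4 n k x0 z \<in> N3m1 k" using C4_N3m1[of x0 k z] y nk by simp
      ultimately show ?thesis using False by simp
    qed
  qed
qed

definition wrapX :: "int \<Rightarrow> int \<Rightarrow> int \<Rightarrow> int \<Rightarrow> bool" where
  "wrapX n k a b \<longleftrightarrow> (a = k \<and> b = -k) \<or> (a = -k \<and> b = k) \<or>
     (n = 3*k - 1 \<and> ((a = k \<and> b = 1-k) \<or> (a = k-1 \<and> b = -k) \<or> (a = -k \<and> b = k-1) \<or> (a = 1-k \<and> b = k)))"

lemma w1_arith:
  fixes n k a1 b1 d1 m1 :: int
  assumes good: "(n = 3*k \<and> k \<ge> 2) \<or> (n = 3*k - 1 \<and> k \<ge> 3)"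
    and "\<bar>a1\<bar> \<le> k" "\<bar>b1\<bar> \<le> k" "\<bar>d1\<bar> \<le> k"
    and "a1 - b1 - d1 = m1" "m1 \<ge> n \<or> m1 \<le> -n"
  shows "wrapX n k a1 b1"
proof -
  have b: "- k \<le> a1" "a1 \<le> k" "- k \<le> b1" "b1 \<le> k" "- k \<le> d1" "d1 \<le> k" using assms(2-4) by auto
  consider "n = 3*k" "k \<ge> 2" "m1 \<ge> n" | "n = 3*k" "k \<ge> 2" "m1 \<le> -n"
    | "n = 3*k-1" "k \<ge> 3" "m1 \<ge> n" | "n = 3*k-1" "k \<ge> 3" "m1 \<le> -n" using good assms(6) by blast
  then show ?thesis
  proof cases
    case 1
    then have "a1 = k" "b1 = -k" using b assms(5) by linarith+
    then show ?thesis unfolding wrapX_def by simp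
  next
    case 2
    then have "a1 = -k" "b1 = k" using b assms(5) by linarith+
    then show ?thesis unfolding wrapX_def by simp
  next
    case 3
    then have "(a1 = k \<and> b1 = -k) \<or> (a1 = k \<and> b1 = 1 - k) \<or> (a1 = k - 1 \<and> b1 = -k)"
      using b assms(5) by arith
    then show ?thesis unfolding wrapX_def using 3 by auto
  next
    case 4
    then have "(a1 = -k \<and> b1 = k) \<or> (a1 = -k \<and> b1 = k - 1) \<or> (a1 = 1 - k \<and> b1 = k)"
      using b assms(5) by arith
    then show ?thesis unfolding wrapX_def using 4 by auto
  qed
qed

lemma w_arith:
  fixes n k a1 a2 b1 b2 d1 d2 m1 m2 :: int
  assumes good: "(n = 3*k \<and> k \<ge> 2) \<or> (n = 3*k - 1 \<and> k \<ge> 3)"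
    and "\<bar>a1\<bar> + \<bar>a2\<bar> \<le> k" "\<bar>b1\<bar> + \<bar>b2\<bar> \<le> k" "\<bar>d1\<bar> + \<bar>d2\<bar> \<le> k"
    and "a1 - b1 - d1 = m1" "a2 - b2 - d2 = m2"
    and "m1 = 0 \<or> m1 \<ge> n \<or> m1 \<le> -n" "m2 = 0 \<or> m2 \<ge> n \<or> m2 \<le> -n"
    and "m1 \<noteq> 0"
  shows "a2 = 0 \<and> b2 = 0 \<and> \<bar>a1\<bar> \<le> k \<and> \<bar>b1\<bar> \<le> k \<and> \<bar>d1\<bar> \<le> k \<and> (m1 \<ge> n \<or> m1 \<le> -n)"
proof -
  have m1: "\<bar>m1\<bar> \<ge> n" using assms by auto
  have "\<bar>m1\<bar> \<le> \<bar>a1\<bar> + \<bar>b1\<bar> + \<bar>d1\<bar>" using assms(5) by linarith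
  then have s: "\<bar>a2\<bar> + \<bar>b2\<bar> + \<bar>d2\<bar> \<le> 1" using m1 assms(1-4) by linarith
  then have "m2 = 0" using assms(6,8) good by linarith
  then have "a2 = 0 \<and> b2 = 0" using s assms(6) by linarith
  then show ?thesis using assms by auto
qed

lemma mod_shift_eq: "x = y + n \<Longrightarrow> x mod n = y mod (n::int)"
  by simp

lemma modeq: "x = y \<Longrightarrow> x mod n = y mod (n::int)"
  by simp

lemma wrap_z:
  assumes w: "wrapX n k a b" and nk: "n = 3*k \<or> n = 3*k - 1"
  shows "\<exists>z. z mod n \<in> {x0 mod n, (x0+a) mod n, (x0+b) mod n} \<and>
             (z+k) mod n \<in> {x0 mod n, (x0+a) mod n, (x0+b) mod n} \<and>
             (z+2*k) mod n \<in> {x0 mod n, (x0+a) mod n, (x0+b) mod n}"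
proof -
  consider (1) "a = k" "b = -k" | (2) "a = -k" "b = k" | (3) "n = 3*k-1" "a = k" "b = 1-k" | (4) "n = 3*k-1" "a = k-1" "b = -k"
    | (5) "n = 3*k-1" "a = -k" "b = k-1" | (6) "n = 3*k-1" "a = 1-k" "b = k"
    using w unfolding wrapX_def by blast
  then show ?thesis
  proof cases
    case 1
    have f0: "(x0 - k) mod n = (x0+b) mod n" using 1 by (intro modeq) linarith
    have f1: "(x0 - k + k) mod n = x0 mod n" using 1 by (intro modeq) linarith
    have f2: "(x0 - k + 2*k) mod n = (x0+a) mod n" using 1 by (intro modeq) linarith
    show ?thesis by (rule exI[of _ "x0 - k"]) (use f0 f1 f2 in blast)
  next
    case 2
    have f0: "(x0 - k) mod n = (x0+a) mod n" using 2 by (intro modeq) linarith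
    have f1: "(x0 - k + k) mod n = x0 mod n" using 2 by (intro modeq) linarith
    have f2: "(x0 - k + 2*k) mod n = (x0+b) mod n" using 2 by (intro modeq) linarith
    show ?thesis by (rule exI[of _ "x0 - k"]) (use f0 f1 f2 in blast)
  next
    case 3
    have f0: "(x0) mod n = x0 mod n" using 3 by (intro modeq) linarith
    have f1: "(x0 + k) mod n = (x0+a) mod n" using 3 by (intro modeq) linarith
    have f2: "(x0 + 2*k) mod n = (x0+b) mod n" using 3 by (intro mod_shift_eq) linarith
    show ?thesis by (rule exI[of _ "x0"]) (use f0 f1 f2 in blast)
  next
    case 4
    have f0: "(x0 + (k-1)) mod n = (x0+a) mod n" using 4 by (intro modeq) linarith
    have f1: "(x0 + (k-1) + k) mod n = (x0+b) mod n" using 4 by (intro mod_shift_eq) linarith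
    have f2: "(x0 + (k-1) + 2*k) mod n = x0 mod n" using 4 by (intro mod_shift_eq) linarith
    show ?thesis by (rule exI[of _ "x0 + (k-1)"]) (use f0 f1 f2 in blast)
  next
    case 5
    have f0: "(x0 + (k-1)) mod n = (x0+b) mod n" using 5 by (intro modeq) linarith
    have f1: "(x0 + (k-1) + k) mod n = (x0+a) mod n" using 5 by (intro mod_shift_eq) linarith
    have f2: "(x0 + (k-1) + 2*k) mod n = x0 mod n" using 5 by (intro mod_shift_eq) linarith
    show ?thesis by (rule exI[of _ "x0 + (k-1)"]) (use f0 f1 f2 in blast)
  next
    case 6
    have f0: "(x0) mod n = x0 mod n" using 6 by (intro modeq) linarith
    have f1: "(x0 + k) mod n = (x0+b) mod n" using 6 by (intro modeq) linarith
    have f2: "(x0 + 2*k) mod n = (x0+a) mod n" using 6 by (intro mod_shift_eq) linarith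
    show ?thesis by (rule exI[of _ "x0"]) (use f0 f1 f2 in blast)
  qed
qed

lemma mult_n: "0 < (n::int) \<Longrightarrow> j*n = 0 \<or> j*n \<ge> n \<or> j*n \<le> -n"
proof -
  assume n: "0 < n"
  consider "j = 0" | "j \<ge> 1" | "j \<le> -1" by linarith
  then show ?thesis
  proof cases
    case 2 then have "1*n \<le> j*n" using n by (intro mult_right_mono) auto
    then show ?thesis by simp
  next
    case 3 then have "j*n \<le> (-1)*n" using n by (intro mult_right_mono) auto
    then show ?thesis by simp
  qed simp
qed

lemma proj_eq_mod: "x mod n = x' mod n \<Longrightarrow> y mod n = y' mod n \<Longrightarrow> proj n (x, y) = proj n (x', y')"
  by (simp add: proj_def)

lemma maxA:
  assumes good: "(n = 3*k \<and> k \<ge> 2) \<or> (n = 3*k - 1 \<and> k \<ge> 3)"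
    and S: "S \<in> maximal_simplices (VR (torus n) (tdist n) k)"
  shows "S \<in> Mset n k \<union> (if n = 3*k then N3 k else N3m1 k)"
proof -
  have n: "0 < n" and k1: "k \<ge> 1" using good by auto
  have nk: "n = 3*k \<or> n = 3*k - 1" using good by auto
  have SV: "S \<in> VR (torus n) (tdist n) k" using S unfolding maximal_simplices_def by auto
  have Smax: "\<And>T. T \<in> VR (torus n) (tdist n) k \<Longrightarrow> S \<subseteq> T \<Longrightarrow> T = S"
    using S unfolding maximal_simplices_def by auto
  have Stor: "\<And>q. q \<in> S \<Longrightarrow> q \<in> torus n" and fin: "finite S" and ne: "S \<noteq> {}"
    using SV unfolding VR_def by auto
  obtain p0 where p0: "p0 \<in> S" using ne by auto
  define x0 where "x0 = fst p0"
  define y0 where "y0 = snd p0"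
  have p0r: "0 \<le> x0" "x0 < n" "0 \<le> y0" "y0 < n" using torus_D[OF Stor[OF p0]] unfolding x0_def y0_def by auto
  have p0e: "p0 = proj n (x0, y0)" using torus_proj[OF Stor[OF p0]] unfolding x0_def y0_def by simp
  have "\<forall>q. \<exists>j. q \<in> S \<longrightarrow> zdist (fst q + fst j*n, snd q + snd j*n) p0 \<le> k"
  proof
    fix q
    show "\<exists>j. q \<in> S \<longrightarrow> zdist (fst q + fst j*n, snd q + snd j*n) p0 \<le> k"
    proof (cases "q \<in> S")
      case True
      obtain j1 j2 where "zdist (fst q + j1*n, snd q + j2*n) p0 = tdist n q (proj n p0)"
        using lift_exists[OF n] by blast
      moreover have "tdist n q (proj n p0) \<le> k" using VR_clique[OF SV True p0] torus_proj[OF Stor[OF p0]] by simp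
      ultimately show ?thesis by (intro exI[of _ "(j1,j2)"]) simp
    qed simp
  qed
  then obtain g where g0: "\<forall>q. q \<in> S \<longrightarrow> zdist (fst q + fst (g q)*n, snd q + snd (g q)*n) p0 \<le> k"
    by (rule choice[THEN exE])
  define f where "f q = (fst q + fst (g q)*n, snd q + snd (g q)*n)" for q
  have fk: "\<And>q. q \<in> S \<Longrightarrow> zdist (f q) p0 \<le> k" using g0 unfolding f_def by blast
  have pf: "\<And>q. q \<in> S \<Longrightarrow> proj n (f q) = q"
  proof -
    fix q assume q: "q \<in> S"
    have "proj n (f q) = proj n q" unfolding f_def proj_def by simp
    then show "proj n (f q) = q" using torus_proj[OF Stor[OF q]] by simp
  qed
  show ?thesis
  proof (cases "\<forall>q\<in>S. \<forall>r\<in>S. zdist (f q) (f r) \<le> k")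
    case True
    have FV: "f ` S \<in> VR UNIV zdist k" by (rule VR_I) (use True fin ne in auto)
    define B where "B = Box (Min (uu ` f ` S)) (Min (vv ` f ` S)) k"
    have sub: "f ` S \<subseteq> B" using clique_in_box[OF FV] unfolding B_def .
    have BV: "proj n ` B \<in> VR (torus n) (tdist n) k" unfolding B_def by (rule proj_VR[OF n box_VR[OF k1]])
    have "S \<subseteq> proj n ` B"
    proof
      fix q assume q: "q \<in> S"
      then have "f q \<in> B" using sub by auto
      then show "q \<in> proj n ` B" using pf[OF q] by force
    qed
    then have eq: "proj n ` B = S" using Smax BV by blast
    have "B \<in> maximal_simplices (VR UNIV zdist k)" unfolding B_def by (rule box_max[OF k1])
    then have "S \<in> Mset n k" unfolding Mset_def using eq by blast
    then show ?thesis by simp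
  next
    case False
    then obtain q r where q: "q \<in> S" and r: "r \<in> S" and far: "\<not> zdist (f q) (f r) \<le> k" by blast
    define a1 where "a1 = fst (f q) - x0"
    define a2 where "a2 = snd (f q) - y0"
    define b1 where "b1 = fst (f r) - x0"
    define b2 where "b2 = snd (f r) - y0"
    have ha: "\<bar>a1\<bar> + \<bar>a2\<bar> \<le> k" using fk[OF q] unfolding zdist_def a1_def a2_def x0_def y0_def by simp
    have hb: "\<bar>b1\<bar> + \<bar>b2\<bar> \<le> k" using fk[OF r] unfolding zdist_def b1_def b2_def x0_def y0_def by simp
    obtain i1 where i1: "\<bar>fst q + i1*n - fst r\<bar> = cdist n (fst q) (fst r)" using cdist_lift[OF n] by blast
    obtain i2 where i2: "\<bar>snd q + i2*n - snd r\<bar> = cdist n (snd q) (snd r)" using cdist_lift[OF n] by blast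
    define d1 where "d1 = fst q + i1*n - fst r"
    define d2 where "d2 = snd q + i2*n - snd r"
    have hd: "\<bar>d1\<bar> + \<bar>d2\<bar> \<le> k" using VR_clique[OF SV q r] i1 i2 unfolding tdist_def d1_def d2_def by simp
    define m1 where "m1 = (fst (g q) - fst (g r) - i1) * n"
    define m2 where "m2 = (snd (g q) - snd (g r) - i2) * n"
    have e1: "a1 - b1 - d1 = m1" unfolding a1_def b1_def d1_def m1_def f_def by (simp add: algebra_simps)
    have e2: "a2 - b2 - d2 = m2" unfolding a2_def b2_def d2_def m2_def f_def by (simp add: algebra_simps)
    have mm1: "m1 = 0 \<or> m1 \<ge> n \<or> m1 \<le> -n" unfolding m1_def by (rule mult_n[OF n])
    have mm2: "m2 = 0 \<or> m2 \<ge> n \<or> m2 \<le> -n" unfolding m2_def by (rule mult_n[OF n])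
    have fqr: "fst (f q) - fst (f r) = a1 - b1" "snd (f q) - snd (f r) = a2 - b2"
      unfolding a1_def b1_def a2_def b2_def by simp_all
    have "\<not> (m1 = 0 \<and> m2 = 0)"
    proof
      assume "m1 = 0 \<and> m2 = 0"
      then have "a1 - b1 = d1" "a2 - b2 = d2" using e1 e2 by simp_all
      then have "zdist (f q) (f r) \<le> k" using hd fqr unfolding zdist_def by simp
      then show False using far by simp
    qed
    then consider "m1 \<noteq> 0" | "m2 \<noteq> 0" by blast
    then show ?thesis
    proof cases
      case 1
      have W: "a2 = 0 \<and> b2 = 0 \<and> \<bar>a1\<bar> \<le> k \<and> \<bar>b1\<bar> \<le> k \<and> \<bar>d1\<bar> \<le> k \<and> (m1 \<ge> n \<or> m1 \<le> -n)"
        by (rule w_arith[OF good ha hb hd e1 e2 mm1 mm2 1])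
      then have wx: "wrapX n k a1 b1" using w1_arith[OF good _ _ _ e1] by blast
      have fq: "f q = (x0 + a1, y0)" "f r = (x0 + b1, y0)" using W unfolding a1_def a2_def b1_def b2_def
        by (simp_all add: prod_eq_iff)
      have qe: "q = proj n (x0 + a1, y0)" "r = proj n (x0 + b1, y0)" using pf[OF q] pf[OF r] fq by simp_all
      obtain z where z: "z mod n \<in> {x0 mod n, (x0+a1) mod n, (x0+b1) mod n}"
             "(z+k) mod n \<in> {x0 mod n, (x0+a1) mod n, (x0+b1) mod n}"
             "(z+2*k) mod n \<in> {x0 mod n, (x0+a1) mod n, (x0+b1) mod n}"
        using wrap_z[OF wx nk, of x0] by blast
      have mem: "proj n (w, y0) \<in> S" if "w mod n \<in> {x0 mod n, (x0+a1) mod n, (x0+b1) mod n}" for w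
      proof -
        have "proj n (w, y0) = proj n (x0, y0) \<or> proj n (w, y0) = proj n (x0+a1, y0) \<or> proj n (w, y0) = proj n (x0+b1, y0)"
          using that proj_eq_mod[of w n _ y0 y0] by blast
        then show ?thesis using p0 q r p0e qe by auto
      qed
      have "S \<in> (if n = 3*k then N3 k else N3m1 k)"
        by (rule finish_row[OF good S p0r(3,4) mem[OF z(1)] mem[OF z(2)] mem[OF z(3)]])
      then show ?thesis by simp
    next
      case 2
      have W: "a1 = 0 \<and> b1 = 0 \<and> \<bar>a2\<bar> \<le> k \<and> \<bar>b2\<bar> \<le> k \<and> \<bar>d2\<bar> \<le> k \<and> (m2 \<ge> n \<or> m2 \<le> -n)"
        by (rule w_arith[OF good _ _ _ e2 e1 mm2 mm1 2]) (use ha hb hd in linarith)+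
      then have wx: "wrapX n k a2 b2" using w1_arith[OF good _ _ _ e2] by blast
      have fq: "f q = (x0, y0 + a2)" "f r = (x0, y0 + b2)" using W unfolding a1_def a2_def b1_def b2_def
        by (simp_all add: prod_eq_iff)
      have qe: "q = proj n (x0, y0 + a2)" "r = proj n (x0, y0 + b2)" using pf[OF q] pf[OF r] fq by simp_all
      obtain z where z: "z mod n \<in> {y0 mod n, (y0+a2) mod n, (y0+b2) mod n}"
             "(z+k) mod n \<in> {y0 mod n, (y0+a2) mod n, (y0+b2) mod n}"
             "(z+2*k) mod n \<in> {y0 mod n, (y0+a2) mod n, (y0+b2) mod n}"
        using wrap_z[OF wx nk, of y0] by blast
      have mem: "proj n (x0, w) \<in> S" if "w mod n \<in> {y0 mod n, (y0+a2) mod n, (y0+b2) mod n}" for w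
      proof -
        have "proj n (x0, w) = proj n (x0, y0) \<or> proj n (x0, w) = proj n (x0, y0+a2) \<or> proj n (x0, w) = proj n (x0, y0+b2)"
          using that proj_eq_mod[of x0 n x0 w] by blast
        then show ?thesis using p0 q r p0e qe by auto
      qed
      have "S \<in> (if n = 3*k then N3 k else N3m1 k)"
        by (rule finish_col[OF good S p0r(1,2) mem[OF z(1)] mem[OF z(2)] mem[OF z(3)]])
      then show ?thesis by simp
    qed
  qed
qed

lemma main_eq:
  assumes good: "(n = 3*k \<and> k \<ge> 2) \<or> (n = 3*k - 1 \<and> k \<ge> 3)"
  shows "maximal_simplices (VR (torus n) (tdist n) k) = Mset n k \<union> (if n = 3*k then N3 k else N3m1 k)"
proof
  show "maximal_simplices (VR (torus n) (tdist n) k) \<subseteq> Mset n k \<union> (if n = 3*k then N3 k else N3m1 k)"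
    using maxA[OF good] by blast
next
  have n: "0 < n" and k1: "k \<ge> 1" and nk: "2*k+2 \<le> n" "3*k < 2*n" using good by auto
  have M: "Mset n k \<subseteq> maximal_simplices (VR (torus n) (tdist n) k)"
  proof
    fix \<sigma> assume "\<sigma> \<in> Mset n k"
    then obtain C where C: "C \<in> maximal_simplices (VR UNIV zdist k)" and s: "\<sigma> = proj n ` C"
      unfolding Mset_def by blast
    obtain u0 v0 where "C = Box u0 v0 k" using max_is_box[OF k1 C] by blast
    then show "\<sigma> \<in> maximal_simplices (VR (torus n) (tdist n) k)"
      using proj_box_max[OF n nk k1] s by simp
  qed
  have N: "(if n = 3*k then N3 k else N3m1 k) \<subseteq> maximal_simplices (VR (torus n) (tdist n) k)"
  proof (cases "n = 3*k")
    case True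
    then show ?thesis using N3_max[of k] good by auto
  next
    case False
    then have "n = 3*k - 1" "k \<ge> 3" using good by auto
    then show ?thesis using N3m1_max[of k] False by auto
  qed
  show "Mset n k \<union> (if n = 3*k then N3 k else N3m1 k) \<subseteq> maximal_simplices (VR (torus n) (tdist n) k)"
    using M N by blast
qed

theorem lemma5p5:
  shows "(\<forall>k::int. k \<ge> 2 \<longrightarrow>
            maximal_simplices (VR (torus (3 * k)) (tdist (3 * k)) k) = Mset (3 * k) k \<union> N3 k)
       \<and> (\<forall>k::int. k \<ge> 3 \<longrightarrow>
            maximal_simplices (VR (torus (3 * k - 1)) (tdist (3 * k - 1)) k) = Mset (3 * k - 1) k \<union> N3m1 k)"
proof (intro conjI allI impI)
  fix k :: int assume k: "k \<ge> 2"
  show "maximal_simplices (VR (torus (3 * k)) (tdist (3 * k)) k) = Mset (3 * k) k \<union> N3 k"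
    using main_eq[of "3*k" k] k by simp
next
  fix k :: int assume k: "k \<ge> 3"
  show "maximal_simplices (VR (torus (3 * k - 1)) (tdist (3 * k - 1)) k) = Mset (3 * k - 1) k \<union> N3m1 k"
    using main_eq[of "3*k-1" k] k by simp
qed

end
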